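(* Let $f:\{0,1\}^n\to\{0,1\}$ be a boolean function that is not invariant under any nonzero translation, i.e.\ $S_f=\{0^n\}$. Then $Q_E^{na}(f)=n$.
   Context: Addition of bit strings is in $\mathbb Z_2^n$ (bitwise mod 2). $S_f:=\{z\in\{0,1\}^n: f(x)=f(x+z)\ \text{for all } x\}$. Nonadaptive exact quantum query model: let $\mathcal H_{\rm in}$ have orthonormal basis $|0\rangle,\dots,|n\rangle$ and let the oracle $O_x$ act by $|i\rangle\mapsto(-1)^{x_i}|i\rangle$ with convention $x_0=0$. A nonadaptive quantum algorithm making $k$ queries consists of an input-independent state $|\psi\rangle\in\mathcal H_{\rm in}^{\otimes k}\otimes\mathcal H_{\rm work}$ (with $\mathcal H_{\rm work}$ a finite-dimensional workspace), to which $O_x^{\otimes k}\otimes I$ is applied, followed by an input-independent two-outcome measurement with outcomes labelled $0,1$. It computes $f$ exactly if for every $x$ the outcome is $f(x)$ with probability $1$. $Q_E^{na}(f)$ is the minimum such $k$. *)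

theory Defs
  imports Complex_Main
begin

text \<open>Bit strings of length n are represented as bool lists of length n
  (True = 1). Position i (1 \<le> i \<le> n) of the paper is list index i-1.\<close>

definition bxor :: "bool list \<Rightarrow> bool list \<Rightarrow> bool list" where
  "bxor x z = map2 (\<lambda>a b. a \<noteq> b) x z"

definition bitstrings :: "nat \<Rightarrow> bool list set" where
  "bitstrings n = {x. length x = n}"

definition S_f :: "nat \<Rightarrow> (bool list \<Rightarrow> bool) \<Rightarrow> bool list set" where
  "S_f n f = {z \<in> bitstrings n. \<forall>x \<in> bitstrings n. f x = f (bxor x z)}"

text \<open>Query register basis |0>,...,|n>; the bit x_i with convention x_0 = 0.\<close>
definition qbit :: "bool list \<Rightarrow> nat \<Rightarrow> bool" where
  "qbit x i = (if i = 0 then False else x ! (i - 1))"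

text \<open>Basis of H_in^{\<otimes>k} \<otimes> H_work, where H_work has dimension d:
  pairs (query indices i_1..i_k, workspace index w).\<close>
definition basis_idx :: "nat \<Rightarrow> nat \<Rightarrow> nat \<Rightarrow> (nat list \<times> nat) set" where
  "basis_idx n k d = {(is, w). length is = k \<and> set is \<subseteq> {0..n} \<and> w < d}"

text \<open>Action of O_x^{\<otimes>k} \<otimes> I on a state.\<close>
definition apply_oracle :: "bool list \<Rightarrow> (nat list \<times> nat \<Rightarrow> complex) \<Rightarrow> (nat list \<times> nat \<Rightarrow> complex)" where
  "apply_oracle x \<psi> = (\<lambda>(is, w). (-1) ^ length (filter (qbit x) is) * \<psi> (is, w))"

definition sqnorm :: "'i set \<Rightarrow> ('i \<Rightarrow> complex) \<Rightarrow> real" where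
  "sqnorm I v = (\<Sum>a\<in>I. (cmod (v a))\<^sup>2)"

definition qform :: "'i set \<Rightarrow> ('i \<Rightarrow> 'i \<Rightarrow> complex) \<Rightarrow> ('i \<Rightarrow> complex) \<Rightarrow> complex" where
  "qform I E v = (\<Sum>a\<in>I. \<Sum>b\<in>I. cnj (v a) * E a b * v b)"

text \<open>A two-outcome measurement (POVM) {E, I - E} on the space with basis I:
  E Hermitian with 0 \<le> E \<le> I (operator order).\<close>
definition two_outcome_povm :: "'i set \<Rightarrow> ('i \<Rightarrow> 'i \<Rightarrow> complex) \<Rightarrow> bool" where
  "two_outcome_povm I E \<longleftrightarrow>
     (\<forall>a\<in>I. \<forall>b\<in>I. E b a = cnj (E a b)) \<and>
     (\<forall>v. 0 \<le> Re (qform I E v) \<and> Re (qform I E v) \<le> sqnorm I v)"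

text \<open>E is the effect for outcome 0; its probability on state v is <v|E|v>.\<close>
definition prob_outcome0 :: "'i set \<Rightarrow> ('i \<Rightarrow> 'i \<Rightarrow> complex) \<Rightarrow> ('i \<Rightarrow> complex) \<Rightarrow> real" where
  "prob_outcome0 I E v = Re (qform I E v)"

definition computes_exactly_na :: "nat \<Rightarrow> (bool list \<Rightarrow> bool) \<Rightarrow> nat \<Rightarrow> bool" where
  "computes_exactly_na n f k \<longleftrightarrow>
     (\<exists>d::nat. \<exists>\<psi> :: nat list \<times> nat \<Rightarrow> complex. \<exists>E.
        d \<ge> 1 \<and> sqnorm (basis_idx n k d) \<psi> = 1 \<and>
        two_outcome_povm (basis_idx n k d) E \<and>
        (\<forall>x \<in> bitstrings n.
           prob_outcome0 (basis_idx n k d) E (apply_oracle x \<psi>) = (if f x then 0 else 1)))"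

definition QE_na :: "nat \<Rightarrow> (bool list \<Rightarrow> bool) \<Rightarrow> nat" where
  "QE_na n f = (LEAST k. computes_exactly_na n f k)"

end

theory Submission imports Defs begin

definition sg :: "bool list \<Rightarrow> nat list \<Rightarrow> complex" where
  "sg x L = (-1) ^ length (filter (qbit x) L)"

lemma sg_Nil[simp]: "sg x [] = 1" by (simp add: sg_def)
lemma sg_Cons: "sg x (i # L) = (if qbit x i then -1 else 1) * sg x L"
  by (simp add: sg_def)
lemma sg_append: "sg x (L @ M) = sg x L * sg x M"
  by (simp add: sg_def power_add)
lemma sg_sq[simp]: "sg x L * sg x L = 1"
  by (simp add: sg_def power_add[symmetric] flip: power_mult_distrib)
lemma cnj_sg[simp]: "cnj (sg x L) = sg x L"
  by (simp add: sg_def)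
lemma apply_oracle_sg: "apply_oracle x \<psi> a = sg x (fst a) * \<psi> a"
  by (cases a) (simp add: apply_oracle_def sg_def)

lemma sg_bxor:
  assumes "length x = n" "length z = n" "set L \<subseteq> {0..n}"
  shows "sg x L * sg (bxor x z) L = sg z L"
  using assms(3)
proof (induction L)
  case Nil then show ?case by simp
next
  case (Cons i L)
  have q: "qbit (bxor x z) i = (qbit x i \<noteq> qbit z i)"
    using Cons.prems assms(1,2) by (auto simp: qbit_def bxor_def)
  have "sg x (i#L) * sg (bxor x z) (i#L) = ((if qbit x i then -1 else 1) * (if qbit (bxor x z) i then -1 else 1)) * (sg x L * sg (bxor x z) L)"
    by (simp add: sg_Cons)
  also have "\<dots> = sg z (i#L)" using Cons q by (auto simp: sg_Cons)
  finally show ?case .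
qed

lemma sg_zero: assumes "set L \<subseteq> {0..n}" shows "sg (replicate n False) L = 1"
  using assms by (induction L) (auto simp: sg_Cons qbit_def)

definition flip :: "nat \<Rightarrow> bool list \<Rightarrow> bool list" where
  "flip j z = z[j-1 := \<not> z ! (j-1)]"

lemma sg_flip:
  assumes "1 \<le> j" "j \<le> length z"
  shows "sg (flip j z) L = (-1) ^ count_list L j * sg z L"
proof (induction L)
  case Nil then show ?case by simp
next
  case (Cons i L)
  have "qbit (flip j z) i = (if i = j then \<not> qbit z i else qbit z i)"
    using assms by (auto simp: qbit_def flip_def nth_list_update)
  then show ?case using Cons by (auto simp: sg_Cons)
qed

lemma finite_bitstrings[simp]: "finite (bitstrings n)"
  unfolding bitstrings_def using finite_lists_length_eq[of "UNIV::bool set" n] by simp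

lemma card_bitstrings: "card (bitstrings n) = 2 ^ n"
  unfolding bitstrings_def using card_lists_length_eq[of "UNIV::bool set" n] by simp

lemma key:
  assumes "1 \<le> j" "j \<le> n" "odd (count_list L j)"
  shows "(\<Sum>z\<in>bitstrings n. sg z L) = 0"
proof -
  have "(\<Sum>z\<in>bitstrings n. sg z L) = (\<Sum>z\<in>bitstrings n. sg (flip j z) L)"
    by (rule sum.reindex_bij_witness[where i="flip j" and j="flip j"])
       (use assms in \<open>auto simp: flip_def bitstrings_def\<close>)
  also have "\<dots> = (\<Sum>z\<in>bitstrings n. - sg z L)"
    by (rule sum.cong) (use assms in \<open>auto simp: sg_flip bitstrings_def\<close>)
  finally show ?thesis by (simp add: sum_negf)
qed


definition BB :: "'i set \<Rightarrow> ('i \<Rightarrow> 'i \<Rightarrow> complex) \<Rightarrow> ('i \<Rightarrow> complex) \<Rightarrow> ('i \<Rightarrow> complex) \<Rightarrow> complex" where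
  "BB I F u w = (\<Sum>a\<in>I. \<Sum>b\<in>I. cnj (u a) * F a b * w b)"

lemma BB_herm:
  assumes "\<forall>a\<in>I. \<forall>b\<in>I. F b a = cnj (F a b)"
  shows "BB I F w u = cnj (BB I F u w)"
proof -
  have "cnj (BB I F u w) = (\<Sum>a\<in>I. \<Sum>b\<in>I. u a * cnj (F a b) * cnj (w b))"
    by (simp add: BB_def)
  also have "\<dots> = (\<Sum>a\<in>I. \<Sum>b\<in>I. cnj (w b) * F b a * u a)"
  proof (rule sum.cong[OF refl], rule sum.cong[OF refl])
    fix a b assume "a \<in> I" "b \<in> I"
    then have "F b a = cnj (F a b)" using assms by blast
    then show "u a * cnj (F a b) * cnj (w b) = cnj (w b) * F b a * u a" by (simp only: ac_simps)
  qed
  also have "\<dots> = BB I F w u" unfolding BB_def by (rule sum.swap)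
  finally show ?thesis by simp
qed

lemma qform_expand:
  "qform I F (\<lambda>a. u a + t * w a) = qform I F u + t * BB I F u w + cnj t * BB I F w u + cnj t * t * qform I F w"
proof -
  have e: "\<And>a b. cnj (u a + t * w a) * F a b * (u b + t * w b) = cnj (u a) * F a b * u b + t * (cnj (u a) * F a b * w b) + cnj t * (cnj (w a) * F a b * u b) + cnj t * t * (cnj (w a) * F a b * w b)"
    by (simp add: algebra_simps)
  show ?thesis unfolding qform_def BB_def e
    by (simp only: sum.distrib sum_distrib_left)
qed

lemma herm_orth:
  assumes fin: "finite I" and H: "\<forall>a\<in>I. \<forall>b\<in>I. F b a = cnj (F a b)"
    and P: "\<And>v. 0 \<le> Re (qform I F v)" and W: "Re (qform I F w) = 0"
  shows "BB I F u w = 0"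
proof (rule ccontr)
  let ?B = "BB I F u w"
  assume nz: "?B \<noteq> 0"
  have ex: "\<And>t. Re (qform I F u) + 2 * Re (t * ?B) \<ge> 0"
  proof -
    fix t :: complex
    have "Re (qform I F (\<lambda>a. u a + t * w a)) = Re (qform I F u) + Re (t * ?B + cnj (t * ?B)) + Re (cnj t * t * qform I F w)"
      by (simp add: qform_expand BB_herm[OF H, where w=w and u=u])
    also have "Re (cnj t * t * qform I F w) = 0"
    proof -
      have "cnj t * t = of_real ((cmod t)\<^sup>2)" by (simp only: complex_norm_square mult.commute)
      then show ?thesis using W by simp
    qed
    finally show "Re (qform I F u) + 2 * Re (t * ?B) \<ge> 0"
      using P[of "\<lambda>a. u a + t * w a"] by simp
  qed
  define s where "s = (Re (qform I F u) + 1) / (2 * (cmod ?B)\<^sup>2)"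
  have cpos: "(cmod ?B)\<^sup>2 > 0" using nz by simp
  have "Re ((- of_real s * cnj ?B) * ?B) = - s * (cmod ?B)\<^sup>2"
  proof -
    have "(cmod ?B)\<^sup>2 = Re ?B * Re ?B + Im ?B * Im ?B" using cmod_power2[of ?B] by (simp only: power2_eq_square)
    then show ?thesis by (simp add: algebra_simps)
  qed
  then have "Re (qform I F u) - 2 * s * (cmod ?B)\<^sup>2 \<ge> 0"
    using ex[of "- of_real s * cnj ?B"] by simp
  moreover have "2 * s * (cmod ?B)\<^sup>2 = Re (qform I F u) + 1"
    unfolding s_def using cpos by (simp add: field_simps)
  ultimately show False by simp
qed


lemma basis_idx_eq: "basis_idx n k d = {is. set is \<subseteq> {0..n} \<and> length is = k} \<times> {..<d}"
  unfolding basis_idx_def by auto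

lemma finite_basis[simp]: "finite (basis_idx n k d)"
  unfolding basis_idx_eq
  by (intro finite_cartesian_product finite_lists_length_eq) auto

lemma cmod_sg[simp]: "cmod (sg x L) = 1"
  by (simp add: sg_def norm_power)

lemma sum_cnj_self: "(\<Sum>a\<in>I. cnj (v a) * v a) = of_real (sqnorm I v)"
  unfolding sqnorm_def of_real_sum
  by (rule sum.cong[OF refl]) (simp only: complex_norm_square mult.commute)

lemma sqnorm_oracle: "sqnorm I (apply_oracle x \<psi>) = sqnorm I \<psi>"
  unfolding sqnorm_def by (simp add: apply_oracle_sg norm_mult)

lemma qform_F2:
  assumes "finite I"
  shows "qform I (\<lambda>a b. (if a = b then 1 else 0) - E a b) v = (\<Sum>a\<in>I. cnj (v a) * v a) - qform I E v"
proof -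
  have "qform I (\<lambda>a b. (if a = b then 1 else 0) - E a b) v
      = (\<Sum>a\<in>I. \<Sum>b\<in>I. (if a = b then cnj (v a) * v b else 0) - cnj (v a) * E a b * v b)"
    unfolding qform_def by (intro sum.cong refl) (simp add: left_diff_distrib right_diff_distrib)
  also have "\<dots> = (\<Sum>a\<in>I. cnj (v a) * v a) - qform I E v"
      proof -
    have d: "(\<Sum>a\<in>I. \<Sum>b\<in>I. (if a = b then cnj (v a) * v b else 0)) = (\<Sum>a\<in>I. cnj (v a) * v a)"
      by (rule sum.cong[OF refl]) (simp add: sum.delta'[OF assms])
    show ?thesis unfolding qform_def sum_subtractf d ..
  qed
  finally show ?thesis .
qed

lemma BB_F2:
  assumes "finite I"
  shows "BB I (\<lambda>a b. (if a = b then 1 else 0) - E a b) u w = (\<Sum>a\<in>I. cnj (u a) * w a) - BB I E u w"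
proof -
  have "BB I (\<lambda>a b. (if a = b then 1 else 0) - E a b) u w
      = (\<Sum>a\<in>I. \<Sum>b\<in>I. (if a = b then cnj (u a) * w b else 0) - cnj (u a) * E a b * w b)"
    unfolding BB_def by (intro sum.cong refl) (simp add: left_diff_distrib right_diff_distrib)
  also have "\<dots> = (\<Sum>a\<in>I. cnj (u a) * w a) - BB I E u w"
      proof -
    have d: "(\<Sum>a\<in>I. \<Sum>b\<in>I. (if a = b then cnj (u a) * w b else 0)) = (\<Sum>a\<in>I. cnj (u a) * w a)"
      by (rule sum.cong[OF refl]) (simp add: sum.delta'[OF assms])
    show ?thesis unfolding BB_def sum_subtractf d ..
  qed
  finally show ?thesis .
qed

lemma orth:
  assumes fin: "finite I" and P: "two_outcome_povm I E" and nrm: "sqnorm I u = 1"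
    and pu: "prob_outcome0 I E u = 1" and pw: "prob_outcome0 I E w = 0"
  shows "(\<Sum>a\<in>I. cnj (w a) * u a) = 0"
proof -
  have H: "\<forall>a\<in>I. \<forall>b\<in>I. E b a = cnj (E a b)" and R: "\<And>v. 0 \<le> Re (qform I E v) \<and> Re (qform I E v) \<le> sqnorm I v"
    using P unfolding two_outcome_povm_def by blast+
  have b1: "BB I E u w = 0"
    by (rule herm_orth[OF fin H]) (use R pw in \<open>auto simp: prob_outcome0_def\<close>)
  define F2 where "F2 = (\<lambda>a b. (if a = b then 1 else 0) - E a b)"
  have H2: "\<forall>a\<in>I. \<forall>b\<in>I. F2 b a = cnj (F2 a b)"
  proof (intro ballI)
    fix a b assume "a \<in> I" "b \<in> I"
    then have e: "E b a = cnj (E a b)" using H by blast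
    show "F2 b a = cnj (F2 a b)" unfolding F2_def by (subst e) auto
  qed
  have ReF2: "\<And>v. Re (qform I F2 v) = sqnorm I v - Re (qform I E v)"
    unfolding F2_def qform_F2[OF fin] sum_cnj_self by simp
  have b2: "BB I F2 w u = 0"
    by (rule herm_orth[OF fin H2]) (use R pu nrm ReF2 in \<open>auto simp: prob_outcome0_def\<close>)
  have "(\<Sum>a\<in>I. cnj (w a) * u a) = BB I E w u"
    using b2 unfolding F2_def BB_F2[OF fin] by simp
  also have "\<dots> = cnj (BB I E u w)" by (rule BB_herm[OF H])
  finally show ?thesis using b1 by simp
qed


lemma count_upt: assumes "1 \<le> j" "j \<le> n" shows "count_list [1..<Suc n] j = 1"
proof -
  have "count_list [1..<Suc n] j = card ({x. j = x} \<inter> set [1..<Suc n])"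
    by (simp add: count_list_eq_length_filter distinct_length_filter)
  also have "{x. j = x} \<inter> set [1..<Suc n] = {j}" using assms by auto
  finally show ?thesis by simp
qed

lemma length_bxor[simp]: "length (bxor x z) = min (length x) (length z)"
  by (simp add: bxor_def)

lemma lower:
  assumes S: "S_f n f = {replicate n False}" and k: "k < n"
  shows "\<not> computes_exactly_na n f k"
proof
  assume "computes_exactly_na n f k"
  then obtain d \<psi> E where nrm: "sqnorm (basis_idx n k d) \<psi> = 1"
    and P: "two_outcome_povm (basis_idx n k d) E"
    and pr: "\<And>x. x \<in> bitstrings n \<Longrightarrow> prob_outcome0 (basis_idx n k d) E (apply_oracle x \<psi>) = (if f x then 0 else 1)"
    unfolding computes_exactly_na_def by blast
  define I where "I = basis_idx n k d"
  have fin: "finite I" unfolding I_def by simp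
  have Iset: "\<And>a. a \<in> I \<Longrightarrow> set (fst a) \<subseteq> {0..n} \<and> length (fst a) = k"
    unfolding I_def basis_idx_def by auto
  define m where "m a = cnj (\<psi> a) * \<psi> a" for a
  define G where "G z = (\<Sum>a\<in>I. sg z (fst a) * m a)" for z
  have orth2: "(\<Sum>a\<in>I. sg x (fst a) * sg y (fst a) * m a) = 0"
    if "x \<in> bitstrings n" "y \<in> bitstrings n" "\<not> f x" "f y" for x y
  proof -
    have "(\<Sum>a\<in>I. cnj (apply_oracle y \<psi> a) * apply_oracle x \<psi> a) = 0"
      by (rule orth[OF fin P[folded I_def]])
         (use that nrm pr in \<open>simp_all add: I_def sqnorm_oracle\<close>)
    moreover have "\<And>a. cnj (apply_oracle y \<psi> a) * apply_oracle x \<psi> a = sg x (fst a) * sg y (fst a) * m a"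
      by (simp add: apply_oracle_sg m_def)
    ultimately show ?thesis by simp
  qed
  have Gz: "G z = 0" if z: "z \<in> bitstrings n" "z \<noteq> replicate n False" for z
  proof -
    have "z \<notin> S_f n f" using S z by auto
    then obtain x where x: "x \<in> bitstrings n" and fx: "f x \<noteq> f (bxor x z)"
      using z unfolding S_f_def by auto
    define y where "y = bxor x z"
    have y: "y \<in> bitstrings n" using x z unfolding y_def bitstrings_def by simp
    have "(\<Sum>a\<in>I. sg x (fst a) * sg y (fst a) * m a) = 0"
    proof (cases "f x")
      case True
      then have "(\<Sum>a\<in>I. sg y (fst a) * sg x (fst a) * m a) = 0"
        using orth2[OF y x] fx unfolding y_def by simp
      then show ?thesis by (simp add: mult.commute)
    next
      case False
      then show ?thesis using orth2[OF x y] fx unfolding y_def by simp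
    qed
    moreover have "sg x (fst a) * sg y (fst a) = sg z (fst a)" if "a \<in> I" for a
      using sg_bxor[of x n z "fst a"] x z Iset[OF that] unfolding y_def bitstrings_def by simp
    ultimately show ?thesis unfolding G_def by simp
  qed
  have G0: "G (replicate n False) = 1"
  proof -
    have "G (replicate n False) = (\<Sum>a\<in>I. m a)"
      unfolding G_def using Iset by (intro sum.cong refl) (simp add: sg_zero)
    also have "\<dots> = 1" unfolding m_def sum_cnj_self using nrm by (simp add: I_def)
    finally show ?thesis .
  qed
  define L1 where "L1 = [1..<Suc n]"
  have z0: "replicate n False \<in> bitstrings n" by (simp add: bitstrings_def)
  have r1: "(\<Sum>z\<in>bitstrings n. sg z L1 * G z) = sg (replicate n False) L1 * G (replicate n False) + (\<Sum>z\<in>bitstrings n - {replicate n False}. sg z L1 * G z)"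
    by (rule sum.remove[OF finite_bitstrings z0])
  have r2: "(\<Sum>z\<in>bitstrings n - {replicate n False}. sg z L1 * G z) = 0"
    by (rule sum.neutral) (use Gz in auto)
  have r3: "sg (replicate n False) L1 = 1" unfolding L1_def by (rule sg_zero) auto
  have one: "(\<Sum>z\<in>bitstrings n. sg z L1 * G z) = 1" using r1 r2 r3 G0 by simp
  have "(\<Sum>z\<in>bitstrings n. sg z L1 * G z) = (\<Sum>a\<in>I. m a * (\<Sum>z\<in>bitstrings n. sg z (L1 @ fst a)))"
    unfolding G_def sum_distrib_left sg_append
    by (subst sum.swap) (simp add: algebra_simps)
  also have "\<dots> = 0"
  proof (rule sum.neutral, rule ballI)
    fix a assume a: "a \<in> I"
    have "\<not> {1..n} \<subseteq> set (fst a)"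
    proof
      assume "{1..n} \<subseteq> set (fst a)"
      then have "card {1..n} \<le> card (set (fst a))" by (intro card_mono) auto
      also have "\<dots> \<le> length (fst a)" by (rule card_length)
      finally show False using Iset[OF a] k by simp
    qed
    then obtain j where j: "1 \<le> j" "j \<le> n" "j \<notin> set (fst a)" by (meson atLeastAtMost_iff subsetI)
    have "odd (count_list (L1 @ fst a) j)"
      unfolding L1_def count_list_append count_upt[OF j(1,2)] using j(3) by simp
    then show "m a * (\<Sum>z\<in>bitstrings n. sg z (L1 @ fst a)) = 0"
      using key[OF j(1,2)] by simp
  qed
  finally show False using one by simp
qed


definition enc :: "nat \<Rightarrow> bool list \<Rightarrow> nat list" where
  "enc n z = map (\<lambda>i. if z ! (i - 1) then i else 0) [1..<Suc n]"

lemma length_enc[simp]: "length (enc n z) = n" by (simp add: enc_def)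
lemma set_enc: "set (enc n z) \<subseteq> {0..n}" by (auto simp: enc_def)
lemma nth_enc: "i < n \<Longrightarrow> enc n z ! i = (if z ! i then Suc i else 0)"
  by (simp add: enc_def del: upt_Suc)

lemma inj_enc: "inj_on (enc n) (bitstrings n)"
proof
  fix x y assume x: "x \<in> bitstrings n" and y: "y \<in> bitstrings n" and e: "enc n x = enc n y"
  show "x = y"
  proof (rule nth_equalityI)
    show "length x = length y" using x y by (simp add: bitstrings_def)
    fix i assume "i < length x"
    then have i: "i < n" using x by (simp add: bitstrings_def)
    have "enc n x ! i = enc n y ! i" using e by simp
    then show "x ! i = y ! i" using i by (simp add: nth_enc split: if_splits)
  qed
qed

lemma length_filter_enc:
  "length (filter P (enc n z)) = card ({i. P (if z ! (i - 1) then i else 0)} \<inter> {1..n})"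
proof -
  have "length (filter P (enc n z)) = length (filter (P \<circ> (\<lambda>i. if z ! (i - 1) then i else 0)) [1..<Suc n])"
    unfolding enc_def filter_map by simp
  also have "\<dots> = card ({i. P (if z ! (i - 1) then i else 0)} \<inter> {1..n})"
    unfolding distinct_length_filter[OF distinct_upt] set_upt atLeastLessThanSuc_atLeastAtMost o_def ..
  finally show ?thesis .
qed

lemma count_enc:
  assumes "1 \<le> j" "j \<le> n"
  shows "count_list (enc n z) j = (if z ! (j - 1) then 1 else 0)"
proof -
  have "{i. j = (if z ! (i - 1) then i else 0)} \<inter> {1..n} = (if z ! (j - 1) then {j} else {})"
    using assms by auto
  then show ?thesis unfolding count_list_eq_length_filter length_filter_enc by simp
qed

lemma sg_enc_sym: "sg x (enc n z) = sg z (enc n x)"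
proof -
  have "{i. qbit x (if z ! (i - 1) then i else 0)} \<inter> {1..n} = {i. qbit z (if x ! (i - 1) then i else 0)} \<inter> {1..n}"
    by (auto simp: qbit_def)
  then show ?thesis unfolding sg_def length_filter_enc by simp
qed

lemma Hsum:
  assumes z1: "z1 \<in> bitstrings n" and z2: "z2 \<in> bitstrings n"
  shows "(\<Sum>x\<in>bitstrings n. sg x (enc n z1 @ enc n z2)) = (if z1 = z2 then 2 ^ n else 0)"
proof (cases "z1 = z2")
  case True
  then show ?thesis by (simp add: sg_append card_bitstrings)
next
  case False
  have "\<exists>i<n. z1 ! i \<noteq> z2 ! i"
  proof (rule ccontr)
    assume "\<not> ?thesis"
    then have "z1 = z2" using z1 z2 by (intro nth_equalityI) (auto simp: bitstrings_def)
    then show False using False by simp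
  qed
  then obtain i where i: "i < n" "z1 ! i \<noteq> z2 ! i" by blast
  have "odd (count_list (enc n z1 @ enc n z2) (Suc i))"
    using i count_enc[of "Suc i" n] by auto
  then show ?thesis using False key[of "Suc i" n] i by simp
qed


lemma qform_gram:
  fixes \<phi> :: "'x \<Rightarrow> 'i \<Rightarrow> complex"
  shows "qform I (\<lambda>a b. \<Sum>x\<in>F. \<phi> x a * cnj (\<phi> x b)) v
       = (\<Sum>x\<in>F. cnj (\<Sum>b\<in>I. cnj (\<phi> x b) * v b) * (\<Sum>b\<in>I. cnj (\<phi> x b) * v b))"
proof -
  have "qform I (\<lambda>a b. \<Sum>x\<in>F. \<phi> x a * cnj (\<phi> x b)) v
      = (\<Sum>a\<in>I. \<Sum>b\<in>I. \<Sum>x\<in>F. (cnj (v a) * \<phi> x a) * (cnj (\<phi> x b) * v b))"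
    unfolding qform_def sum_distrib_left sum_distrib_right
    by (intro sum.cong refl) (simp add: ac_simps)
  also have "\<dots> = (\<Sum>a\<in>I. \<Sum>x\<in>F. \<Sum>b\<in>I. (cnj (v a) * \<phi> x a) * (cnj (\<phi> x b) * v b))"
    by (intro sum.cong refl) (rule sum.swap)
  also have "\<dots> = (\<Sum>x\<in>F. \<Sum>a\<in>I. \<Sum>b\<in>I. (cnj (v a) * \<phi> x a) * (cnj (\<phi> x b) * v b))"
    by (rule sum.swap)
  also have "\<dots> = (\<Sum>x\<in>F. (\<Sum>a\<in>I. cnj (v a) * \<phi> x a) * (\<Sum>b\<in>I. cnj (\<phi> x b) * v b))"
    by (simp only: sum_product)
  also have "\<dots> = (\<Sum>x\<in>F. cnj (\<Sum>b\<in>I. cnj (\<phi> x b) * v b) * (\<Sum>b\<in>I. cnj (\<phi> x b) * v b))"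
    by (simp add: mult.commute)
  finally show ?thesis .
qed

lemma sum_cnj_self': "(\<Sum>x\<in>F. cnj (P x) * P x) = of_real (\<Sum>x\<in>F. (cmod (P x))\<^sup>2)"
  unfolding of_real_sum
  by (rule sum.cong[OF refl]) (simp only: complex_norm_square mult.commute)


lemma upper: "computes_exactly_na n f n"
proof -
  define B where "B = bitstrings n"
  define I where "I = basis_idx n n 1"
  define r :: real where "r = 1 / sqrt (2 ^ n)"
  define A where "A = (\<lambda>z. (enc n z, 0::nat)) ` B"
  define \<psi> :: "nat list \<times> nat \<Rightarrow> complex" where "\<psi> a = (if a \<in> A then of_real r else 0)" for a
  define \<phi> where "\<phi> x = apply_oracle x \<psi>" for x
  define F where "F = {x\<in>B. \<not> f x}"
  define E where "E a b = (\<Sum>x\<in>F. \<phi> x a * cnj (\<phi> x b))" for a b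
  have finB: "finite B" unfolding B_def by simp
  have finI: "finite I" unfolding I_def by simp
  have AI: "A \<subseteq> I" unfolding A_def I_def basis_idx_def B_def using set_enc by auto
  have injA: "inj_on (\<lambda>z. (enc n z, 0::nat)) B" using inj_enc unfolding B_def inj_on_def by auto
  have r2: "r\<^sup>2 * 2 ^ n = 1" unfolding r_def by (simp add: power_divide)
  have r2c: "(complex_of_real r)\<^sup>2 * 2 ^ n = 1"
    using arg_cong[where f=complex_of_real, OF r2] by simp
  have sumA: "(\<Sum>a\<in>I. if a \<in> A then h a else 0) = (\<Sum>z\<in>B. h (enc n z, 0))" for h :: "_ \<Rightarrow> complex"
  proof -
    have "(\<Sum>a\<in>I. if a \<in> A then h a else 0) = sum h (I \<inter> A)"
      by (rule sum.inter_restrict[OF finI, symmetric])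
    also have "I \<inter> A = A" using AI by blast
    also have "sum h A = (\<Sum>z\<in>B. h (enc n z, 0))" unfolding A_def
      by (subst sum.reindex[OF injA]) (simp add: o_def)
    finally show ?thesis .
  qed
  have phi: "\<phi> x a = (if a \<in> A then sg x (fst a) * of_real r else 0)" for x a
    unfolding \<phi>_def \<psi>_def apply_oracle_sg by simp
  have IP: "(\<Sum>b\<in>I. cnj (\<phi> x b) * \<phi> y b) = (if x = y then 1 else 0)"
    if x: "x \<in> B" and y: "y \<in> B" for x y
  proof -
    have "(\<Sum>b\<in>I. cnj (\<phi> x b) * \<phi> y b) = (\<Sum>b\<in>I. if b \<in> A then of_real (r\<^sup>2) * (sg x (fst b) * sg y (fst b)) else 0)"
      by (intro sum.cong refl) (simp add: phi power2_eq_square)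
    also have "\<dots> = (\<Sum>z\<in>B. of_real (r\<^sup>2) * (sg x (enc n z) * sg y (enc n z)))"
      using sumA[of "\<lambda>b. of_real (r\<^sup>2) * (sg x (fst b) * sg y (fst b))"] by simp
    also have "\<dots> = of_real (r\<^sup>2) * (\<Sum>z\<in>B. sg z (enc n x @ enc n y))"
      by (simp add: sum_distrib_left sg_append sg_enc_sym[of x] sg_enc_sym[of y])
    also have "\<dots> = (if x = y then 1 else 0)"
      using Hsum[OF x[unfolded B_def] y[unfolded B_def]] r2 unfolding B_def
      by (simp add: r2c)
    finally show ?thesis .
  qed
  have K: "(\<Sum>x\<in>B. \<phi> x a * cnj (\<phi> x b)) = (if a = b \<and> a \<in> A then 1 else 0)"
    if a: "a \<in> I" and b: "b \<in> I" for a b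
  proof (cases "a \<in> A \<and> b \<in> A")
    case False
    then show ?thesis by (auto simp: phi)
  next
    case True
    then obtain z1 z2 where z: "z1 \<in> B" "z2 \<in> B" "a = (enc n z1, 0)" "b = (enc n z2, 0)"
      unfolding A_def by blast
    have "(\<Sum>x\<in>B. \<phi> x a * cnj (\<phi> x b)) = of_real (r\<^sup>2) * (\<Sum>x\<in>B. sg x (enc n z1 @ enc n z2))"
      using True z by (simp add: phi sum_distrib_left sg_append power2_eq_square ac_simps)
    also have "\<dots> = (if z1 = z2 then 1 else 0)"
      using Hsum[OF z(1,2)[unfolded B_def]] r2 unfolding B_def
      by (simp add: r2c)
    also have "(z1 = z2) = (a = b)" using z injA inj_onD by fastforce
    finally show ?thesis using True by simp
  qed
  have nrm: "sqnorm I \<psi> = 1"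
  proof -
    have "of_real (sqnorm I \<psi>) = (\<Sum>a\<in>I. cnj (\<psi> a) * \<psi> a)" by (simp add: sum_cnj_self)
    also have "\<dots> = (\<Sum>a\<in>I. if a \<in> A then of_real (r\<^sup>2) else 0)"
      by (intro sum.cong refl) (simp add: \<psi>_def power2_eq_square)
    also have "\<dots> = (\<Sum>z\<in>B. of_real (r\<^sup>2))" using sumA[of "\<lambda>_. of_real (r\<^sup>2)"] by simp
    also have "\<dots> = of_real (r\<^sup>2 * 2 ^ n)" by (simp add: B_def card_bitstrings)
    finally show ?thesis using r2 by simp
  qed
  have herm: "\<forall>a\<in>I. \<forall>b\<in>I. E b a = cnj (E a b)"
    unfolding E_def by (simp add: mult.commute)
  have qE: "qform I E v = (\<Sum>x\<in>F. cnj (\<Sum>b\<in>I. cnj (\<phi> x b) * v b) * (\<Sum>b\<in>I. cnj (\<phi> x b) * v b))" for v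
    unfolding E_def by (rule qform_gram)
  have povm: "two_outcome_povm I E"
    unfolding two_outcome_povm_def
  proof (intro conjI herm allI)
    fix v
    define P where "P x = (\<Sum>b\<in>I. cnj (\<phi> x b) * v b)" for x
    have ReQ: "Re (qform I E v) = (\<Sum>x\<in>F. (cmod (P x))\<^sup>2)"
      unfolding qE P_def[symmetric] sum_cnj_self' by simp
    then show "0 \<le> Re (qform I E v)" by (simp add: sum_nonneg)
    have "(\<Sum>x\<in>F. (cmod (P x))\<^sup>2) \<le> (\<Sum>x\<in>B. (cmod (P x))\<^sup>2)"
      by (rule sum_mono2[OF finB]) (auto simp: F_def)
    also have "\<dots> = (\<Sum>a\<in>I. if a \<in> A then (cmod (v a))\<^sup>2 else 0)"
    proof -
      have "of_real (\<Sum>x\<in>B. (cmod (P x))\<^sup>2) = qform I (\<lambda>a b. \<Sum>x\<in>B. \<phi> x a * cnj (\<phi> x b)) v"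
        unfolding qform_gram P_def[symmetric] sum_cnj_self' ..
      also have "\<dots> = (\<Sum>a\<in>I. \<Sum>b\<in>I. cnj (v a) * (if a = b \<and> a \<in> A then 1 else 0) * v b)"
        unfolding qform_def by (intro sum.cong refl) (simp add: K)
      also have "\<dots> = (\<Sum>a\<in>I. if a \<in> A then cnj (v a) * v a else 0)"
      proof (intro sum.cong refl)
        fix a assume "a \<in> I"
        have geq: "(\<lambda>b. cnj (v a) * (if a = b \<and> a \<in> A then 1 else 0) * v b)
            = (\<lambda>b. if a = b then (if a \<in> A then cnj (v a) * v a else 0) else 0)" (is "_ = ?g") by auto
        then show "(\<Sum>b\<in>I. cnj (v a) * (if a = b \<and> a \<in> A then 1 else 0) * v b)
            = (if a \<in> A then cnj (v a) * v a else 0)"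
          unfolding geq using \<open>a \<in> I\<close> sum.delta'[OF finI, of a "\<lambda>b. if a \<in> A then cnj (v a) * v a else 0"] by simp
      qed
      also have "\<dots> = of_real (\<Sum>a\<in>I. if a \<in> A then (cmod (v a))\<^sup>2 else 0)"
        unfolding of_real_sum by (intro sum.cong refl) (simp only: if_distrib[of of_real] of_real_0 complex_norm_square mult.commute)
      finally show ?thesis by (simp only: of_real_eq_iff)
    qed
    also have "\<dots> \<le> sqnorm I v" unfolding sqnorm_def by (intro sum_mono) auto
    finally show "Re (qform I E v) \<le> sqnorm I v" using ReQ by simp
  qed
  have prob: "prob_outcome0 I E (apply_oracle y \<psi>) = (if f y then 0 else 1)" if y: "y \<in> bitstrings n" for y
  proof -
    have "qform I E (\<phi> y) = (\<Sum>x\<in>F. if x = y then 1 else 0)"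
      unfolding qE using y by (intro sum.cong refl) (auto simp: IP F_def B_def)
    also have "\<dots> = (if y \<in> F then 1 else 0)" using finB by (simp add: F_def sum.delta')
    finally show ?thesis using y unfolding prob_outcome0_def \<phi>_def F_def B_def by simp
  qed
  show ?thesis unfolding computes_exactly_na_def
    using nrm povm prob unfolding I_def by (intro exI[of _ 1] exI[of _ \<psi>] exI[of _ E]) auto
qed

theorem corollary7p3:
  fixes n :: nat and f :: "bool list \<Rightarrow> bool"
  assumes "S_f n f = {replicate n False}"
  shows "QE_na n f = n"
  unfolding QE_na_def
proof (rule Least_equality)
  show "computes_exactly_na n f n" by (rule upper)
  fix k assume "computes_exactly_na n f k"
  then show "n \<le> k" using lower[OF assms] by (meson not_le)
qed

end
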